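(* Let $F$ be a finite field with $q=|F|$. Let $k,m,n\in\mathbb{N}$ with $k\le m\le n+1$, and fix $a\in F^k$. Then the number of $x\in F^{m+n+1}$ with $(x_0,\ldots,x_{k-1})=a$ and $\operatorname{rank}(H_{m,n}(x))\le m$ is $q^{2m-k}$.
   Context: $\mathbb{N}=\{0,1,2,\ldots\}$. For $x=(x_0,\ldots,x_N)\in F^{N+1}$ and integers $p,p'\ge -1$ with $p+p'\le N$, $H_{p,p'}(x)=(x_{i+j})_{0\le i\le p,\,0\le j\le p'}$. *)

theory Defs
  imports "Jordan_Normal_Form.DL_Rank"
begin

definition hankel :: "nat \<Rightarrow> nat \<Rightarrow> 'a list \<Rightarrow> 'a mat" where
  "hankel p p' x = mat (p + 1) (p' + 1) (\<lambda>(i, j). x ! (i + j))"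

definition mat_rank :: "'a::field mat \<Rightarrow> nat" where
  "mat_rank A = vec_space.rank (dim_row A) A"

end

theory Submission
  imports Defs "HOL-Computational_Algebra.Formal_Power_Series"
begin


definition Qf :: "'a::field fps \<Rightarrow> nat \<Rightarrow> nat \<Rightarrow> bool" where
  "Qf X m n \<longleftrightarrow> (\<exists>U. U \<noteq> 0 \<and> (\<forall>i>m. fps_nth U i = 0) \<and> (\<forall>j\<le>n. fps_nth (U * X) (m + j) = 0))"

lemma mult_low_zero:
  fixes f g :: "'a::comm_ring_1 fps"
  assumes "\<forall>l\<le>r. fps_nth f l = 0" "l \<le> r"
  shows "fps_nth (f * g) l = 0" "fps_nth (g * f) l = 0"
proof -
  show "fps_nth (f * g) l = 0" unfolding fps_mult_nth using assms by (intro sum.neutral) auto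
  then show "fps_nth (g * f) l = 0" by (simp add: mult.commute)
qed

lemma fps_eqI_deg:
  fixes U :: "'a::comm_ring_1 fps"
  assumes "\<forall>l\<le>r. fps_nth U l = 0" "\<forall>i>r. fps_nth U i = 0"
  shows "U = 0"
  using assms by (intro fps_ext) (metis fps_zero_nth not_le)

lemma shift_mult:
  fixes V W :: "'a::comm_ring_1 fps"
  assumes "\<forall>i>k. fps_nth V i = 0" "k \<le> l"
  shows "fps_nth (V * fps_shift p W) l = fps_nth (V * W) (l + p)"
proof -
  have "fps_nth (V * W) (l + p) = (\<Sum>i = 0..l+p. fps_nth V i * fps_nth W (l + p - i))"
    by (simp add: fps_mult_nth)
  also have "\<dots> = (\<Sum>i = 0..l. fps_nth V i * fps_nth W (l + p - i))"
    using assms by (intro sum.mono_neutral_right) auto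
  also have "\<dots> = (\<Sum>i = 0..l. fps_nth V i * fps_nth (fps_shift p W) (l - i))"
    by (intro sum.cong) (auto simp: fps_shift_def)
  finally show ?thesis by (simp add: fps_mult_nth)
qed

lemma Qf_cong:
  assumes "\<forall>l\<le>m+n. fps_nth X l = fps_nth X2 l"
  shows "Qf X m n = Qf X2 m n"
proof -
  have "\<And>U j. j \<le> n \<Longrightarrow> fps_nth (U * X) (m + j) = fps_nth (U * X2) (m + j)"
    unfolding fps_mult_nth using assms by (intro sum.cong) auto
  then show ?thesis unfolding Qf_def by metis
qed

lemma Qf_reduce:
  fixes X' :: "'a::field fps"
  assumes X0: "fps_nth X' 0 \<noteq> 0" and dm: "d < m" and mn: "m \<le> n"
  shows "Qf (fps_X^d * X') m n \<longleftrightarrow> Qf (fps_shift (d+2) (inverse X')) (m-d-1) (n-d-1)"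
proof -
  define W where "W = inverse X'"
  have WX: "W * X' = 1" unfolding W_def using X0 by (rule inverse_mult_eq_1)
  have UX: "fps_nth (U * (fps_X^d * X')) (l + d) = fps_nth (U * X') l" for U l
  proof -
    have e: "U * (fps_X^d * X') = fps_X^d * (U * X')" by (simp add: algebra_simps)
    have "fps_nth (U * (fps_X^d * X')) (l + d) = fps_nth (fps_X^d * (U * X')) (l + d)" by (simp only: e)
    also have "\<dots> = fps_nth (U * X') l" by (simp only: fps_X_power_mult_nth) simp
    finally show ?thesis .
  qed
  show ?thesis
  proof
    assume "Qf (fps_X^d * X') m n"
    then obtain U where U0: "U \<noteq> 0" and Ud: "\<forall>i>m. fps_nth U i = 0"
      and UQ: "\<forall>j\<le>n. fps_nth (U * (fps_X^d * X')) (m + j) = 0" unfolding Qf_def by blast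
    define V where "V = Abs_fps (\<lambda>l. if l + d < m then fps_nth (U * X') l else 0)"
    define Z where "Z = U * X' - V"
    have Vd: "\<forall>i>m-d-1. fps_nth V i = 0" unfolding V_def by auto
    have Z0: "\<forall>l\<le>m+n-d. fps_nth Z l = 0"
    proof (intro allI impI)
      fix l assume l: "l \<le> m+n-d"
      show "fps_nth Z l = 0"
      proof (cases "l + d < m")
        case True then show ?thesis by (simp add: Z_def V_def)
      next
        case False
        have "l + d - m \<le> n" using l dm by linarith
        then have "fps_nth (U * X') l = 0"
          using UQ[rule_format, of "l + d - m"] UX[of U l] False by simp
        then show ?thesis using False by (simp add: Z_def V_def)
      qed
    qed
    have Ueq: "U = V * W + Z * W"
    proof -
      have "U = U * X' * W" using WX by (simp add: mult.assoc mult.commute)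
      also have "U * X' = V + Z" by (simp add: Z_def)
      finally show ?thesis by (simp add: algebra_simps)
    qed
    have V0: "V \<noteq> 0"
    proof
      assume "V = 0"
      then have "U = Z * W" using Ueq by simp
      then have "\<forall>l\<le>m. fps_nth U l = 0" using mult_low_zero(1)[OF Z0] dm mn by force
      then show False using U0 Ud fps_eqI_deg by blast
    qed
    have "\<forall>j\<le>n-d-1. fps_nth (V * fps_shift (d+2) W) (m-d-1 + j) = 0"
    proof (intro allI impI)
      fix j assume j: "j \<le> n-d-1"
      have "fps_nth (V * fps_shift (d+2) W) (m-d-1 + j) = fps_nth (V * W) (m-d-1+j + (d+2))"
        using Vd by (intro shift_mult) auto
      also have "\<dots> = fps_nth U (m-d-1+j+(d+2)) - fps_nth (Z * W) (m-d-1+j+(d+2))"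
        using Ueq by (simp add: algebra_simps)
      also have "\<dots> = 0"
        using Ud mult_low_zero(1)[OF Z0, of "m-d-1+j+(d+2)"] dm j mn by auto
      finally show "fps_nth (V * fps_shift (d+2) W) (m-d-1 + j) = 0" .
    qed
    then show "Qf (fps_shift (d+2) (inverse X')) (m-d-1) (n-d-1)"
      unfolding Qf_def W_def[symmetric] using V0 Vd by blast
  next
    assume "Qf (fps_shift (d+2) (inverse X')) (m-d-1) (n-d-1)"
    then obtain V where V0: "V \<noteq> 0" and Vd: "\<forall>i>m-d-1. fps_nth V i = 0"
      and VQ: "\<forall>j\<le>n-d-1. fps_nth (V * fps_shift (d+2) W) (m-d-1 + j) = 0"
      unfolding Qf_def W_def by blast
    define U where "U = Abs_fps (\<lambda>l. if l \<le> m then fps_nth (V * W) l else 0)"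
    define D where "D = V * W - U"
    have Ud: "\<forall>i>m. fps_nth U i = 0" unfolding U_def by auto
    have D0: "\<forall>l\<le>m+n-d. fps_nth D l = 0"
    proof (intro allI impI)
      fix l assume l: "l \<le> m+n-d"
      show "fps_nth D l = 0"
      proof (cases "l \<le> m")
        case True then show ?thesis by (simp add: D_def U_def)
      next
        case False
        have le: "m-d-1 \<le> l - (d+2)" and eq: "l - (d+2) + (d+2) = l" using False dm by auto
        have "fps_nth (V * W) l = fps_nth (V * fps_shift (d+2) W) (l - (d+2))"
          using shift_mult[OF Vd le, of "d+2" W] unfolding eq by simp
        also have "\<dots> = 0"
        proof -
          have a: "l - m - 1 \<le> n - d - 1" and b: "m - d - 1 + (l - m - 1) = l - (d+2)"
            using False l dm by auto
          show ?thesis using VQ[rule_format, OF a] unfolding b .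
        qed
        finally show ?thesis using False by (simp add: D_def U_def)
      qed
    qed
    have UX': "U * X' = V - D * X'"
    proof -
      have "U = V * W - D" by (simp add: D_def)
      then have "U * X' = (V * W - D) * X'" by simp
      also have "\<dots> = V * (W * X') - D * X'" by (simp add: algebra_simps)
      finally have "U * X' = V * (W * X') - D * X'" .
      then show ?thesis using WX by simp
    qed
    have U0: "U \<noteq> 0"
    proof
      assume "U = 0"
      then have "V = D * X'" using UX' by simp
      then have "\<forall>l\<le>m-d-1. fps_nth V l = 0" using mult_low_zero(1)[OF D0] dm mn by force
      then show False using V0 Vd fps_eqI_deg by blast
    qed
    have "\<forall>j\<le>n. fps_nth (U * (fps_X^d * X')) (m + j) = 0"
    proof (intro allI impI)
      fix j assume j: "j \<le> n"
      have "fps_nth (U * (fps_X^d * X')) (m + j) = fps_nth (U * X') (m + j - d)"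
        using UX[of U "m+j-d"] dm by simp
      also have "\<dots> = fps_nth V (m+j-d) - fps_nth (D * X') (m+j-d)" by (simp add: UX')
      also have "\<dots> = 0" using Vd mult_low_zero(1)[OF D0, of "m+j-d"] dm j by auto
      finally show "fps_nth (U * (fps_X^d * X')) (m + j) = 0" .
    qed
    then show "Qf (fps_X^d * X') m n" unfolding Qf_def using U0 Ud by blast
  qed
qed




lemma Qf_zero_prefix:
  fixes X :: "'a::field fps"
  assumes z: "\<forall>l<m. fps_nth X l = 0" and mn: "m \<le> n"
  shows "Qf X m n \<longleftrightarrow> (\<forall>l\<le>n. fps_nth X l = 0)"
proof
  assume all: "\<forall>l\<le>n. fps_nth X l = 0"
  have "fps_nth (fps_X^m * X) (m + j) = 0" if "j \<le> n" for j
    using all that by (simp add: fps_X_power_mult_nth)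
  moreover have "(fps_X^m :: 'a fps) \<noteq> 0" by simp
  moreover have "\<forall>i>m. fps_nth (fps_X^m :: 'a fps) i = 0" by (simp add: fps_X_power_nth)
  ultimately show "Qf X m n" unfolding Qf_def by blast
next
  assume "Qf X m n"
  then obtain U where U0: "U \<noteq> 0" and Ud: "\<forall>i>m. fps_nth U i = 0"
    and UQ: "\<forall>j\<le>n. fps_nth (U * X) (m + j) = 0" unfolding Qf_def by blast
  show "\<forall>l\<le>n. fps_nth X l = 0"
  proof (rule ccontr)
    assume "\<not> (\<forall>l\<le>n. fps_nth X l = 0)"
    then have ex: "\<exists>l. l \<le> n \<and> fps_nth X l \<noteq> 0" by auto
    define d where "d = (LEAST l. l \<le> n \<and> fps_nth X l \<noteq> 0)"
    have d: "d \<le> n" "fps_nth X d \<noteq> 0" using LeastI_ex[OF ex] unfolding d_def by auto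
    have dlow: "fps_nth X l = 0" if "l < d" for l
      using not_less_Least[of l "\<lambda>l. l \<le> n \<and> fps_nth X l \<noteq> 0"] that d(1) unfolding d_def[symmetric] by auto
    have dm: "m \<le> d" using z d(2) by (metis not_le)
    have exU: "\<exists>e. fps_nth U e \<noteq> 0" using U0 by (metis fps_ext fps_zero_nth)
    define e where "e = (LEAST e. fps_nth U e \<noteq> 0)"
    have e: "fps_nth U e \<noteq> 0" using LeastI_ex[OF exU] unfolding e_def .
    have elow: "fps_nth U i = 0" if "i < e" for i using not_less_Least[of i] that unfolding e_def by auto
    have em: "e \<le> m" using Ud e by (metis not_le)
    have "fps_nth (U * X) (e + d) = (\<Sum>i = 0..e+d. fps_nth U i * fps_nth X (e + d - i))"
      by (simp add: fps_mult_nth)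
    also have "\<dots> = (\<Sum>i\<in>{e}. fps_nth U i * fps_nth X (e + d - i))"
    proof (rule sum.mono_neutral_right)
      show "\<forall>i\<in>{0..e + d} - {e}. fps_nth U i * fps_nth X (e + d - i) = 0"
      proof
        fix i assume i: "i \<in> {0..e + d} - {e}"
        show "fps_nth U i * fps_nth X (e + d - i) = 0"
        proof (cases "i < e")
          case True then show ?thesis using elow by simp
        next
          case False then have "e + d - i < d" using i by auto
          then show ?thesis using dlow by simp
        qed
      qed
    qed auto
    also have "\<dots> \<noteq> 0" using e d by simp
    finally have "fps_nth (U * X) (e + d) \<noteq> 0" .
    moreover have "e + d = m + (e + d - m)" "e + d - m \<le> n" using dm em d by auto
    ultimately show False using UQ by metis
  qed
qed




definition fl :: "'a::zero list \<Rightarrow> 'a fps" where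
  "fl x = Abs_fps (\<lambda>l. if l < length x then x ! l else 0)"

lemma fl_nth[simp]: "fps_nth (fl x) l = (if l < length x then x ! l else 0)"
  by (simp add: fl_def)

definition inv_list :: "'a::field list \<Rightarrow> 'a list" where
  "inv_list z = map (\<lambda>l. fps_nth (inverse (fl z)) l) [0..<length z]"

lemma length_inv_list[simp]: "length (inv_list z) = length z"
  by (simp add: inv_list_def)

lemma nth_inv_list: "l < length z \<Longrightarrow> inv_list z ! l = fps_nth (inverse (fl z)) l"
  by (simp add: inv_list_def)

lemma inverse_agree:
  fixes f g :: "'a::field fps"
  assumes f0: "fps_nth f 0 \<noteq> 0" and g0: "fps_nth g 0 \<noteq> 0"
    and agree: "\<forall>l<L. fps_nth f l = fps_nth g l" and l: "l < L"
  shows "fps_nth (inverse f) l = fps_nth (inverse g) l"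
proof -
  have "inverse f - inverse g = inverse f * (inverse g * g) - inverse g * (inverse f * f)"
    using f0 g0 by (simp add: inverse_mult_eq_1)
  also have "\<dots> = (g - f) * (inverse f * inverse g)" by (simp add: algebra_simps)
  finally have e: "inverse f - inverse g = (g - f) * (inverse f * inverse g)" .
  have "\<forall>k\<le>L-1. fps_nth (g - f) k = 0" using agree l by auto
  from mult_low_zero(1)[OF this, of l] l have "fps_nth (inverse f - inverse g) l = 0"
    unfolding e by auto
  then show ?thesis by simp
qed

lemma fl_inv_list_agree: "l < length z \<Longrightarrow> fps_nth (fl (inv_list z)) l = fps_nth (inverse (fl z)) l"
  by (simp add: nth_inv_list)

lemma inv_list_inv:
  fixes z :: "'a::field list"
  assumes "z \<noteq> []" "z ! 0 \<noteq> 0"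
  shows "inv_list (inv_list z) = z"
proof (rule nth_equalityI)
  show "length (inv_list (inv_list z)) = length z" by simp
  fix l assume "l < length (inv_list (inv_list z))"
  then have l: "l < length z" by simp
  have z0: "fps_nth (fl z) 0 \<noteq> 0" using assms by simp
  have i0: "fps_nth (fl (inv_list z)) 0 \<noteq> 0"
    using assms fl_inv_list_agree[of 0 z] by (simp add: fps_inverse_nth_0)
  have "inv_list (inv_list z) ! l = fps_nth (inverse (fl (inv_list z))) l"
    using l by (simp add: nth_inv_list)
  also have "\<dots> = fps_nth (inverse (inverse (fl z))) l"
    using inverse_agree[OF i0 _ _ l, of "inverse (fl z)"] z0 fl_inv_list_agree[of _ z]
    by (simp add: fps_inverse_nth_0)
  also have "\<dots> = z ! l" using z0 l by (simp add: fps_inverse_idempotent)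
  finally show "inv_list (inv_list z) ! l = z ! l" .
qed

lemma take_inv_list:
  fixes z :: "'a::field list"
  assumes "z \<noteq> []" "z ! 0 \<noteq> 0"
  shows "take j (inv_list z) = inv_list (take j z)"
proof (cases "j = 0")
  case True then show ?thesis by (simp add: inv_list_def)
next
  case False
  show ?thesis
  proof (rule nth_equalityI)
    show "length (take j (inv_list z)) = length (inv_list (take j z))" by simp
    fix l assume "l < length (take j (inv_list z))"
    then have l: "l < j" "l < length z" by auto
    have z0: "fps_nth (fl z) 0 \<noteq> 0" using assms by simp
    have t0: "fps_nth (fl (take j z)) 0 \<noteq> 0" using assms False by simp
    show "take j (inv_list z) ! l = inv_list (take j z) ! l"
      using l inverse_agree[OF z0 t0, of "min j (length z)" l] by (simp add: nth_inv_list)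
  qed
qed

lemma inv_list_nth0: "z \<noteq> [] \<Longrightarrow> inv_list z ! 0 = inverse (z ! 0)"
  by (simp add: nth_inv_list fps_inverse_nth_0)

lemma finite_len: "finite {x::'a::finite list. length x = L}"
  using finite_lists_length_eq[of "UNIV :: 'a set" L] by simp

lemma card_len: "card {x::'a::finite list. length x = L} = card (UNIV::'a set) ^ L"
  using card_lists_length_eq[of "UNIV :: 'a set" L] by simp

lemma card_prefix:
  assumes "length b = j" "j \<le> L"
  shows "card {z::'a::finite list. length z = L \<and> take j z = b} = card (UNIV::'a set) ^ (L - j)"
proof -
  have "{z::'a list. length z = L \<and> take j z = b} = (\<lambda>v. b @ v) ` {v. length v = L - j}"
  proof (rule Set.set_eqI, rule iffI)
    fix z assume z: "z \<in> {z::'a list. length z = L \<and> take j z = b}"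
    then have "z = b @ drop j z" "length (drop j z) = L - j"
      by (metis (mono_tags) append_take_drop_id mem_Collect_eq, simp add: z[simplified])
    then show "z \<in> (\<lambda>v. b @ v) ` {v. length v = L - j}" by blast
  next
    fix z assume "z \<in> (\<lambda>v. b @ v) ` {v. length v = L - j}"
    then obtain v where "z = b @ v" "length v = L - j" by blast
    then show "z \<in> {z::'a list. length z = L \<and> take j z = b}" using assms by simp
  qed
  moreover have "inj_on (\<lambda>v. b @ v) {v. length v = L - j}" by (rule inj_onI) simp
  ultimately show ?thesis using card_len by (simp add: card_image)
qed




lemma count_split_a:
  assumes "length b = j" "j \<le> p" "p \<le> L"
  shows "card {z::'a::finite list. length z = L \<and> take j z = b \<and> R (drop p z)}
       = card (UNIV::'a set) ^ (p - j) * card {y. length y = L - p \<and> R y}"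
proof -
  let ?A = "{u::'a list. length u = p \<and> take j u = b}"
  let ?B = "{y::'a list. length y = L - p \<and> R y}"
  have "{z::'a list. length z = L \<and> take j z = b \<and> R (drop p z)} = (\<lambda>(u,y). u @ y) ` (?A \<times> ?B)"
  proof (rule Set.set_eqI, rule iffI)
    fix z assume z: "z \<in> {z::'a list. length z = L \<and> take j z = b \<and> R (drop p z)}"
    have "take j (take p z) = b" using z assms by (simp add: min_absorb1)
    then have "(take p z, drop p z) \<in> ?A \<times> ?B" using z assms by simp
    moreover have "z = (\<lambda>(u,y). u @ y) (take p z, drop p z)" by simp
    ultimately show "z \<in> (\<lambda>(u,y). u @ y) ` (?A \<times> ?B)" by blast
  next
    fix z assume "z \<in> (\<lambda>(u,y). u @ y) ` (?A \<times> ?B)"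
    then obtain w where w: "w \<in> ?A \<times> ?B" "z = (\<lambda>(u,y). u @ y) w" by (rule imageE)
    obtain u y where "w = (u, y)" by (cases w)
    then have "z = u @ y" "u \<in> ?A" "y \<in> ?B" using w by auto
    then show "z \<in> {z::'a list. length z = L \<and> take j z = b \<and> R (drop p z)}" using assms by simp
  qed
  moreover have "inj_on (\<lambda>(u,y). u @ y) (?A \<times> ?B)"
  proof (rule inj_onI)
    fix w1 w2 assume "w1 \<in> ?A \<times> ?B" "w2 \<in> ?A \<times> ?B" "(\<lambda>(u,y). u @ y) w1 = (\<lambda>(u,y). u @ y) w2"
    then show "w1 = w2" by (cases w1, cases w2) simp
  qed
  moreover have "card ?A = card (UNIV::'a set) ^ (p - j)" using card_prefix[OF assms(1,2)] .
  moreover have "finite ?A" by (rule finite_subset[OF _ finite_len[of p]]) blast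
  moreover have "finite ?B" by (rule finite_subset[OF _ finite_len[of "L-p"]]) blast
  ultimately show ?thesis by (simp add: card_image card_cartesian_product)
qed

lemma count_split_b:
  assumes "length b = j" "p \<le> j" "j \<le> L"
  shows "card {z::'a::finite list. length z = L \<and> take j z = b \<and> R (drop p z)}
       = card {y. length y = L - p \<and> take (j - p) y = drop p b \<and> R y}"
proof -
  let ?B = "{y::'a list. length y = L - p \<and> take (j - p) y = drop p b \<and> R y}"
  have "{z::'a list. length z = L \<and> take j z = b \<and> R (drop p z)} = (\<lambda>y. take p b @ y) ` ?B"
  proof (rule Set.set_eqI, rule iffI)
    fix z assume z: "z \<in> {z::'a list. length z = L \<and> take j z = b \<and> R (drop p z)}"
    have "take p z = take p b" using z assms by (metis (mono_tags) mem_Collect_eq min.absorb1 take_take)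
    moreover have "take (j - p) (drop p z) = drop p b" using z assms by (metis (mono_tags) mem_Collect_eq drop_take)
    ultimately have "z = take p b @ drop p z" "drop p z \<in> ?B" using z assms
      by (metis append_take_drop_id, simp)
    then show "z \<in> (\<lambda>y. take p b @ y) ` ?B" by blast
  next
    fix z assume "z \<in> (\<lambda>y. take p b @ y) ` ?B"
    then obtain y where y: "z = take p b @ y" "y \<in> ?B" by (rule imageE) simp
    have "take j z = take p b @ take (j - p) y" using y assms by simp
    also have "\<dots> = b" using y assms by (metis (mono_tags) append_take_drop_id mem_Collect_eq)
    finally show "z \<in> {z::'a list. length z = L \<and> take j z = b \<and> R (drop p z)}" using y assms by simp
  qed
  moreover have "inj_on (\<lambda>y. take p b @ y) ?B" by (rule inj_onI) simp
  ultimately show ?thesis by (simp add: card_image)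
qed




lemma (in vec_space) span_orth:
  assumes S: "S \<subseteq> carrier_vec n" and orth: "\<forall>s\<in>S. s \<bullet> c = 0"
    and w: "w \<in> span S" and c: "c \<in> carrier_vec n"
  shows "w \<bullet> c = 0"
proof -
  obtain a A where A: "w = lincomb a A" "finite A" "A \<subseteq> S"
    using w unfolding span_def by blast
  have AC: "A \<subseteq> carrier_vec n" using A S by auto
  have "w \<bullet> c = (\<Sum>i\<in>{0..<n}. w $ i * c $ i)" using c by (simp add: scalar_prod_def)
  also have "\<dots> = (\<Sum>i\<in>{0..<n}. (\<Sum>x\<in>A. a x * x $ i) * c $ i)"
    using A(1) lincomb_index[OF _ AC] by (intro sum.cong) auto
  also have "\<dots> = (\<Sum>x\<in>A. a x * (\<Sum>i\<in>{0..<n}. x $ i * c $ i))"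
    by (simp add: sum_distrib_left sum_distrib_right mult.assoc sum.swap[of _ A])
  also have "\<dots> = (\<Sum>x\<in>A. a x * (x \<bullet> c))" using c by (simp add: scalar_prod_def)
  also have "\<dots> = 0" using orth A(3) by (intro sum.neutral) auto
  finally show ?thesis .
qed

lemma (in vec_space) rank_lt_iff:
  assumes A: "A \<in> carrier_mat n nc"
  shows "rank A < n \<longleftrightarrow> (\<exists>c\<in>carrier_vec n. c \<noteq> 0\<^sub>v n \<and> (\<forall>w\<in>set (cols A). w \<bullet> c = 0))"
proof -
  obtain S where max: "maximal S (\<lambda>T. T \<subseteq> set (cols A) \<and> lin_indpt T)"
    using maximal_exists[of "(\<lambda>T. T \<subseteq> set (cols A) \<and> lin_indpt T)" "card (set (cols A))" "{}"]
    by (meson List.finite_set card_mono empty_iff empty_subsetI finite_lin_indpt2 rev_finite_subset)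
  have rk: "rank A = card S" using rank_card_indpt[OF A max] .
  have colsC: "set (cols A) \<subseteq> carrier_vec n" using A cols_dim by blast
  have Scols: "S \<subseteq> set (cols A)" and li: "lin_indpt S" using max unfolding maximal_def by auto
  have SC: "S \<subseteq> carrier_vec n" using Scols colsC by blast
  have finS: "finite S" using Scols finite_subset by blast
  show ?thesis
  proof
    assume "rank A < n"
    then have cS: "card S < n" using rk by simp
    obtain sl where sl: "set sl = S" "distinct sl" using finite_distinct_list[OF finS] by blast
    have lsl: "length sl = card S" using sl distinct_card by fastforce
    define f where "f = (\<lambda>i. if i < length sl then sl ! i else 0\<^sub>v n)"
    define B where "B = mat\<^sub>r n n (\<lambda>i. if i = n - 1 then 0\<^sub>v n else f i)"
    have fC: "f \<in> {0..<n} \<rightarrow> carrier_vec n" unfolding f_def using sl SC nth_mem by fastforce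
    have "det B = 0" unfolding B_def using cS by (intro det_row_0 fC) auto
    moreover have BC: "B \<in> carrier_mat n n" unfolding B_def by simp
    ultimately obtain v where v: "v \<in> carrier_vec n" "v \<noteq> 0\<^sub>v n" "B *\<^sub>v v = 0\<^sub>v n"
      using det_0_iff_vec_prod_zero_field by blast
    have orth: "\<forall>s\<in>S. s \<bullet> v = 0"
    proof
      fix s assume "s \<in> S"
      then obtain i where i: "i < length sl" "s = sl ! i" using sl by (metis in_set_conv_nth)
      have ilt: "i < n" "i \<noteq> n - 1" using i lsl cS by auto
      have sC: "s \<in> carrier_vec n" using \<open>s \<in> S\<close> SC by blast
      have "row B i = s" unfolding B_def using ilt i sC by (simp add: f_def)
      then have "(B *\<^sub>v v) $ i = s \<bullet> v" using ilt BC by simp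
      then show "s \<bullet> v = 0" using v(3) ilt by simp
    qed
    have "\<forall>w\<in>set (cols A). w \<bullet> v = 0"
    proof
      fix w assume w: "w \<in> set (cols A)"
      have "w \<in> span S"
      proof (cases "w \<in> S")
        case True then show ?thesis using in_own_span[OF SC] by blast
      next
        case False
        have "S \<union> {w} \<subseteq> set (cols A)" using Scols w by blast
        moreover have "S \<union> {w} \<noteq> S" using False by blast
        ultimately have "\<not> lin_indpt (S \<union> {w})" using max unfolding maximal_def by blast
        then show ?thesis using lin_dep_iff_in_span[OF SC li _ False] w colsC by blast
      qed
      then show "w \<bullet> v = 0" using span_orth[OF SC orth _ v(1)] by blast
    qed
    then show "\<exists>c\<in>carrier_vec n. c \<noteq> 0\<^sub>v n \<and> (\<forall>w\<in>set (cols A). w \<bullet> c = 0)" using v by blast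
  next
    assume "\<exists>c\<in>carrier_vec n. c \<noteq> 0\<^sub>v n \<and> (\<forall>w\<in>set (cols A). w \<bullet> c = 0)"
    then obtain c where c: "c \<in> carrier_vec n" "c \<noteq> 0\<^sub>v n" "\<forall>w\<in>set (cols A). w \<bullet> c = 0" by blast
    show "rank A < n"
    proof (rule ccontr)
      assume "\<not> rank A < n"
      then have "card S \<ge> dim" using rk dim_is_n by simp
      then have "basis S" using dim_li_is_basis[OF fin_dim finS _ li] SC by simp
      then have spanS: "span S = carrier_vec n" unfolding basis_def by simp
      obtain i where i: "i < n" "c $ i \<noteq> 0" using c(1,2)
        by (metis carrier_vecD eq_vecI index_zero_vec(1) index_zero_vec(2))
      have "unit_vec n i \<in> span S" using spanS by simp
      then have "unit_vec n i \<bullet> c = 0" using span_orth[OF SC _ _ c(1)] c(3) Scols by blast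
      moreover have "unit_vec n i \<bullet> c = c $ i" using c(1) i by simp
      ultimately show False using i by simp
    qed
  qed
qed




lemma conv_sum:
  fixes U :: "'a::field fps"
  assumes Ud: "\<forall>i>m. fps_nth U i = 0" and j: "j \<le> n" and len: "length x = m+n+1"
  shows "fps_nth (U * fl x) (m+j) = (\<Sum>i=0..m. x ! (i+j) * fps_nth U (m-i))"
proof -
  have "fps_nth (U * fl x) (m+j) = (\<Sum>i=0..m+j. fps_nth U i * fps_nth (fl x) (m+j-i))"
    by (simp add: fps_mult_nth)
  also have "\<dots> = (\<Sum>i=0..m. fps_nth U i * fps_nth (fl x) (m+j-i))"
    using Ud by (intro sum.mono_neutral_right) auto
  also have "\<dots> = (\<Sum>i=0..m. fps_nth U i * x ! (m+j-i))"
    using j len by (intro sum.cong) auto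
  also have "\<dots> = (\<Sum>i=0..m. fps_nth U (m + 0 - i) * x ! (m+j-(m + 0 - i)))"
    by (rule sum.atLeastAtMost_rev)
  also have "\<dots> = (\<Sum>i=0..m. x ! (i+j) * fps_nth U (m-i))"
    by (intro sum.cong) (auto simp: mult.commute add.commute)
  finally show ?thesis .
qed

lemma rank_hankel_iff:
  fixes x :: "'a::field list"
  assumes len: "length x = m+n+1"
  shows "mat_rank (hankel m n x) \<le> m \<longleftrightarrow> Qf (fl x) m n"
proof -
  let ?H = "hankel m n x"
  have HC: "?H \<in> carrier_mat (m+1) (n+1)" by (simp add: hankel_def)
  have "mat_rank ?H \<le> m \<longleftrightarrow> vec_space.rank (m+1) ?H < m+1"
    unfolding mat_rank_def by (simp add: hankel_def less_Suc_eq_le)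
  also have "\<dots> \<longleftrightarrow> (\<exists>c\<in>carrier_vec (m+1). c \<noteq> 0\<^sub>v (m+1) \<and> (\<forall>w\<in>set (cols ?H). w \<bullet> c = 0))"
    by (rule vec_space.rank_lt_iff[OF HC])
  also have "\<dots> \<longleftrightarrow> (\<exists>c\<in>carrier_vec (m+1). c \<noteq> 0\<^sub>v (m+1) \<and>
       (\<forall>j\<le>n. (\<Sum>i=0..m. x ! (i+j) * c $ i) = 0))"
  proof -
    have "(\<forall>w\<in>set (cols ?H). w \<bullet> c = 0) \<longleftrightarrow> (\<forall>j\<le>n. (\<Sum>i=0..m. x ! (i+j) * c $ i) = 0)"
      if c: "c \<in> carrier_vec (m+1)" for c
    proof -
      have colj: "col ?H j \<bullet> c = (\<Sum>i=0..m. x ! (i+j) * c $ i)" if "j \<le> n" for j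
      proof -
        have "col ?H j \<bullet> c = (\<Sum>i\<in>{0..<m+1}. col ?H j $ i * c $ i)" using c by (simp add: scalar_prod_def)
        also have "\<dots> = (\<Sum>i\<in>{0..<m+1}. x ! (i+j) * c $ i)"
          using that by (intro sum.cong) (auto simp: hankel_def)
        also have "{0..<m+1} = {0..m}" by auto
        finally show ?thesis .
      qed
      have "set (cols ?H) = {col ?H j | j. j < n+1}"
      proof -
        have dc: "dim_col ?H = n+1" using HC by simp
        show ?thesis unfolding set_conv_nth using dc by (auto simp: cols_nth) (metis cols_nth lessI less_Suc_eq)
      qed
      then show ?thesis using colj by (auto simp: less_Suc_eq_le)
    qed
    then show ?thesis by auto
  qed
  also have "\<dots> \<longleftrightarrow> Qf (fl x) m n"
  proof
    assume "\<exists>c\<in>carrier_vec (m+1). c \<noteq> 0\<^sub>v (m+1) \<and> (\<forall>j\<le>n. (\<Sum>i=0..m. x ! (i+j) * c $ i) = 0)"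
    then obtain c where c: "c \<in> carrier_vec (m+1)" "c \<noteq> 0\<^sub>v (m+1)"
      "\<forall>j\<le>n. (\<Sum>i=0..m. x ! (i+j) * c $ i) = 0" by blast
    define U where "U = Abs_fps (\<lambda>i. if i \<le> m then c $ (m - i) else 0)"
    have Ud: "\<forall>i>m. fps_nth U i = 0" by (simp add: U_def)
    obtain i where i: "i < m+1" "c $ i \<noteq> 0" using c(1,2)
      by (metis carrier_vecD eq_vecI index_zero_vec(1) index_zero_vec(2))
    have "fps_nth U (m - i) \<noteq> 0" using i by (simp add: U_def)
    then have U0: "U \<noteq> 0" by auto
    have "\<forall>j\<le>n. fps_nth (U * fl x) (m+j) = 0"
    proof (intro allI impI)
      fix j assume j: "j \<le> n"
      have "fps_nth (U * fl x) (m+j) = (\<Sum>i=0..m. x ! (i+j) * fps_nth U (m-i))"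
        by (rule conv_sum[OF Ud j len])
      also have "\<dots> = (\<Sum>i=0..m. x ! (i+j) * c $ i)" by (intro sum.cong) (auto simp: U_def)
      finally show "fps_nth (U * fl x) (m+j) = 0" using c(3) j by simp
    qed
    then show "Qf (fl x) m n" unfolding Qf_def using U0 Ud by blast
  next
    assume "Qf (fl x) m n"
    then obtain U where U0: "U \<noteq> 0" and Ud: "\<forall>i>m. fps_nth U i = 0"
      and UQ: "\<forall>j\<le>n. fps_nth (U * fl x) (m+j) = 0" unfolding Qf_def by blast
    define c where "c = vec (m+1) (\<lambda>i. fps_nth U (m - i))"
    have cC: "c \<in> carrier_vec (m+1)" by (simp add: c_def)
    obtain e where e: "fps_nth U e \<noteq> 0" using U0 by (metis fps_ext fps_zero_nth)
    have em: "e \<le> m" using Ud e by (metis not_le)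
    have mme: "m - (m - e) = e" using em by arith
    have "c $ (m - e) = fps_nth U (m - (m - e))" by (simp add: c_def)
    also have "\<dots> = fps_nth U e" by (simp only: mme)
    finally have "c $ (m - e) \<noteq> 0" using e by simp
    then have c0: "c \<noteq> 0\<^sub>v (m+1)" using em by auto
    have "\<forall>j\<le>n. (\<Sum>i=0..m. x ! (i+j) * c $ i) = 0"
    proof (intro allI impI)
      fix j assume j: "j \<le> n"
      have "(\<Sum>i=0..m. x ! (i+j) * c $ i) = (\<Sum>i=0..m. x ! (i+j) * fps_nth U (m-i))"
        by (intro sum.cong) (auto simp: c_def)
      also have "\<dots> = fps_nth (U * fl x) (m+j)" by (rule conv_sum[OF Ud j len, symmetric])
      finally show "(\<Sum>i=0..m. x ! (i+j) * c $ i) = 0" using UQ j by simp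
    qed
    then show "\<exists>c\<in>carrier_vec (m+1). c \<noteq> 0\<^sub>v (m+1) \<and> (\<forall>j\<le>n. (\<Sum>i=0..m. x ! (i+j) * c $ i) = 0)"
      using cC c0 by blast
  qed
  finally show ?thesis .
qed




lemma sum_prefix:
  fixes T :: "'a::finite list set"
  assumes T: "T \<subseteq> {x. length x = N}" and km: "k \<le> m" "m \<le> N" and a: "length a = k"
    and c: "\<forall>b. length b = m \<longrightarrow> card {x\<in>T. take m x = b} = c"
  shows "card {x\<in>T. take k x = a} = card (UNIV::'a set) ^ (m - k) * c"
proof -
  let ?B = "{b::'a list. length b = m \<and> take k b = a}"
  have eq: "{x\<in>T. take k x = a} = (\<Union>b\<in>?B. {x\<in>T. take m x = b})"
  proof (rule Set.set_eqI, rule iffI)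
    fix x assume x: "x \<in> {x\<in>T. take k x = a}"
    then have "length x = N" using T by blast
    then have "take m x \<in> ?B" using x km by (simp add: min_absorb1)
    then show "x \<in> (\<Union>b\<in>?B. {x\<in>T. take m x = b})" using x by blast
  next
    fix x assume "x \<in> (\<Union>b\<in>?B. {x\<in>T. take m x = b})"
    then obtain b where b: "b \<in> ?B" "x \<in> T" "take m x = b" by blast
    then have "take k x = take k b" using km by (metis min.absorb1 take_take)
    then show "x \<in> {x\<in>T. take k x = a}" using b by simp
  qed
  have finB: "finite ?B" by (rule finite_subset[OF _ finite_len[of m]]) blast
  have finT: "finite T" using finite_subset[OF T finite_len] .
  have "card {x\<in>T. take k x = a} = (\<Sum>b\<in>?B. card {x\<in>T. take m x = b})"
    unfolding eq by (rule card_UN_disjoint[OF finB]) (use finT in auto)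
  also have "\<dots> = (\<Sum>b\<in>?B. c)" using c by (intro sum.cong) auto
  also have "\<dots> = card ?B * c" by simp
  also have "card ?B = card (UNIV::'a set) ^ (m - k)" using card_prefix[OF a km(1)] .
  finally show ?thesis .
qed

definition iota :: "nat \<Rightarrow> 'a::field list \<Rightarrow> 'a list" where
  "iota d x = take d x @ inv_list (drop d x)"

lemma iota_length[simp]: "length (iota d x) = length x"
  by (simp add: iota_def)

lemma iota_iota:
  assumes "d < length x" "x ! d \<noteq> 0"
  shows "iota d (iota d x) = x"
proof -
  have t: "take d (iota d x) = take d x" and dr: "drop d (iota d x) = inv_list (drop d x)"
    using assms by (simp_all add: iota_def)
  have "drop d x \<noteq> []" "drop d x ! 0 \<noteq> 0" using assms by auto
  then show ?thesis unfolding iota_def[of d "iota d x"] t dr by (simp add: inv_list_inv)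
qed

lemma iota_take:
  assumes "d < m" "d < length x" "x ! d \<noteq> 0"
  shows "take m (iota d x) = iota d (take m x)"
proof -
  have ne: "drop d x \<noteq> []" "drop d x ! 0 \<noteq> 0" using assms by auto
  have "take m (iota d x) = take d x @ take (m - d) (inv_list (drop d x))"
    using assms by (simp add: iota_def)
  also have "\<dots> = take d x @ inv_list (take (m - d) (drop d x))" using take_inv_list[OF ne] by simp
  also have "\<dots> = iota d (take m x)" using assms by (simp add: iota_def drop_take min_absorb1)
  finally show ?thesis .
qed

lemma iota_nth_d:
  assumes "d < length x"
  shows "iota d x ! d = inverse (x ! d)"
  using assms by (simp add: iota_def nth_append inv_list_nth0)




lemma claim1:
  fixes x :: "'a::field list"
  assumes len: "length x = m+n+1" and dm: "d < m" and mn: "m \<le> n"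
    and z: "\<forall>i<d. x ! i = 0" and xd: "x ! d \<noteq> 0"
  shows "Qf (fl x) m n \<longleftrightarrow> Qf (fl (drop (2*d+2) (iota d x))) (m-d-1) (n-d-1)"
proof -
  have fx: "fl x = fps_X^d * fl (drop d x)"
  proof (rule fps_ext)
    fix l show "fps_nth (fl x) l = fps_nth (fps_X^d * fl (drop d x)) l"
      using z len dm mn by (auto simp: fps_X_power_mult_nth)
  qed
  have x0: "fps_nth (fl (drop d x)) 0 \<noteq> 0" using xd len dm mn by simp
  have "Qf (fl x) m n \<longleftrightarrow> Qf (fps_shift (d+2) (inverse (fl (drop d x)))) (m-d-1) (n-d-1)"
    unfolding fx by (rule Qf_reduce[OF x0 dm mn])
  also have "\<dots> \<longleftrightarrow> Qf (fl (drop (2*d+2) (iota d x))) (m-d-1) (n-d-1)"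
  proof (rule Qf_cong, intro allI impI)
    fix l assume l: "l \<le> m - d - 1 + (n - d - 1)"
    have l1: "l < length (drop (2*d+2) (iota d x))" using l len dm mn by simp
    have l2: "d + 2 + l < length (drop d x)" using l len dm mn by simp
    have "fps_nth (fl (drop (2*d+2) (iota d x))) l = iota d x ! (2*d+2+l)"
      using l1 by simp
    also have "\<dots> = inv_list (drop d x) ! (d+2+l)"
      using len dm mn by (simp add: iota_def nth_append)
    also have "\<dots> = fps_nth (inverse (fl (drop d x))) (d+2+l)"
      using l2 by (simp add: nth_inv_list)
    finally show "fps_nth (fps_shift (d+2) (inverse (fl (drop d x)))) l
        = fps_nth (fl (drop (2*d+2) (iota d x))) l" by (simp add: add.commute)
  qed
  finally show ?thesis .
qed




lemma main_count:
  fixes a :: "'a::{finite,field} list"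
  shows "m \<le> n \<Longrightarrow> length a \<le> m \<Longrightarrow>
    card {x::'a list. length x = m+n+1 \<and> take (length a) x = a \<and> Qf (fl x) m n}
      = card (UNIV::'a set) ^ (2*m - length a)"
proof (induction m arbitrary: n a rule: less_induct)
  case (less m n a)
  let ?q = "card (UNIV::'a set)"
  let ?N = "m+n+1"
  have full: "card {x::'a list. length x = ?N \<and> take m x = b \<and> Qf (fl x) m n} = ?q ^ m"
    if b: "length b = m" for b :: "'a list"
  proof (cases "\<exists>i<m. b ! i \<noteq> 0")
    case False
    have "{x::'a list. length x = ?N \<and> take m x = b \<and> Qf (fl x) m n}
        = {x. length x = ?N \<and> take (n+1) x = replicate (n+1) 0}"
    proof (rule Set.set_eqI, rule iffI)
      fix x :: "'a list" assume x: "x \<in> {x::'a list. length x = ?N \<and> take m x = b \<and> Qf (fl x) m n}"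
      then have xl: "length x = ?N" and xb: "take m x = b" and xq: "Qf (fl x) m n" by auto
      have "\<forall>l<m. fps_nth (fl x) l = 0"
      proof (intro allI impI)
        fix l assume l: "l < m"
        have "x ! l = take m x ! l" using l by simp
        then show "fps_nth (fl x) l = 0" using False xb l xl by simp
      qed
      then have "\<forall>l\<le>n. fps_nth (fl x) l = 0" using Qf_zero_prefix less.prems(1) xq by blast
      then have xz: "x ! l = 0" if "l < n+1" for l
      proof -
        have "l \<le> n" "l < length x" using that xl by auto
        then show ?thesis using \<open>\<forall>l\<le>n. fps_nth (fl x) l = 0\<close> by (metis fl_nth)
      qed
      have "take (n+1) x = replicate (n+1) 0"
      proof (rule nth_equalityI)
        show "length (take (n+1) x) = length (replicate (n+1) (0::'a))" using xl by simp
        fix l assume "l < length (take (n+1) x)"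
        then have "l < n+1" by simp
        then show "take (n+1) x ! l = replicate (n+1) 0 ! l" using xz by (simp add: nth_replicate del: replicate.simps)
      qed
      then show "x \<in> {x. length x = ?N \<and> take (n+1) x = replicate (n+1) 0}" using xl by simp
    next
      fix x :: "'a list" assume x: "x \<in> {x. length x = ?N \<and> take (n+1) x = replicate (n+1) 0}"
      then have xl: "length x = ?N" and xz: "take (n+1) x = replicate (n+1) 0" by auto
      have xz': "x ! l = 0" if "l \<le> n" for l
      proof -
        have "x ! l = take (n+1) x ! l" using that by simp
        also have "\<dots> = replicate (n+1) 0 ! l" by (simp only: xz)
        also have "\<dots> = 0" using that by (simp add: nth_replicate del: replicate.simps)
        finally show ?thesis .
      qed
      have "take m x = b"
      proof (rule nth_equalityI)
        show "length (take m x) = length b" using xl b by simp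
        fix l assume "l < length (take m x)"
        then have l: "l < m" using xl by simp
        then show "take m x ! l = b ! l" using False xz' less.prems(1) by simp
      qed
      moreover have "Qf (fl x) m n"
      proof -
        have "\<forall>l<m. fps_nth (fl x) l = 0" using xz' less.prems(1) by simp
        moreover have "\<forall>l\<le>n. fps_nth (fl x) l = 0" using xz' by simp
        ultimately show ?thesis using Qf_zero_prefix less.prems(1) by blast
      qed
      ultimately show "x \<in> {x::'a list. length x = ?N \<and> take m x = b \<and> Qf (fl x) m n}" using xl by simp
    qed
    also have "card \<dots> = ?q ^ (?N - (n+1))" by (rule card_prefix) auto
    finally show ?thesis by simp
  next
    case True
    define d where "d = (LEAST i. i < m \<and> b ! i \<noteq> 0)"
    have d: "d < m" "b ! d \<noteq> 0" using LeastI_ex[OF True[simplified Bex_def[symmetric]]]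
      unfolding d_def by (metis (mono_tags, lifting) LeastI_ex True)+
    have dz: "b ! i = 0" if "i < d" for i
      using not_less_Least[of i "\<lambda>i. i < m \<and> b ! i \<noteq> 0"] that d(1) unfolding d_def[symmetric] by auto
    define m' where "m' = m - d - 1"
    define n' where "n' = n - d - 1"
    define p where "p = 2*d+2"
    define R where "R = (\<lambda>y::'a list. Qf (fl y) m' n')"
    have mn: "m \<le> n" by (rule less.prems(1))
    let ?SA = "{x::'a list. length x = ?N \<and> take m x = b \<and> Qf (fl x) m n}"
    let ?S' = "{z::'a list. length z = ?N \<and> take m z = iota d b \<and> R (drop p z)}"
    have inSA: "Qf (fl x) m n \<longleftrightarrow> R (drop p (iota d x))" and xd: "x ! d \<noteq> 0"
      if x: "length x = ?N" "take m x = b" for x :: "'a list"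
    proof -
      have xi: "x ! i = b ! i" if "i < m" for i using x that by (metis nth_take)
      have z: "\<forall>i<d. x ! i = 0" using xi dz d by simp
      show "x ! d \<noteq> 0" using xi d by simp
      then show "Qf (fl x) m n \<longleftrightarrow> R (drop p (iota d x))"
        unfolding R_def p_def m'_def n'_def using claim1[OF x(1) d(1) mn z] by simp
    qed
    have bij: "bij_betw (iota d) ?SA ?S'"
    proof (rule bij_betw_byWitness[where f' = "iota d"])
      show "\<forall>x\<in>?SA. iota d (iota d x) = x" using xd d(1) by (auto intro!: iota_iota)
      show "iota d ` ?SA \<subseteq> ?S'"
      proof
        fix z assume "z \<in> iota d ` ?SA"
        then obtain x where x: "x \<in> ?SA" "z = iota d x" by blast
        have "take m z = iota d b" using x xd[of x] d(1) by (auto simp: iota_take)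
        then show "z \<in> ?S'" using x inSA[of x] by auto
      qed
      have zS: "length (iota d z) = ?N \<and> take m (iota d z) = b \<and> iota d (iota d z) = z
          \<and> z ! d \<noteq> 0" if z: "z \<in> ?S'" for z
      proof -
        have zl: "length z = ?N" and zt: "take m z = iota d b" using z by auto
        have "z ! d = take m z ! d" using d(1) by simp
        also have "\<dots> = inverse (b ! d)" using zt d b by (simp add: iota_nth_d)
        finally have zd: "z ! d \<noteq> 0" using d by simp
        have "take m (iota d z) = iota d (take m z)" using zd zl d(1) by (intro iota_take) auto
        also have "\<dots> = b" using zt b d by (simp add: iota_iota)
        finally show ?thesis using zd zl d(1) by (simp add: iota_iota)
      qed
      show "\<forall>z\<in>?S'. iota d (iota d z) = z" using zS by blast
      show "iota d ` ?S' \<subseteq> ?SA"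
      proof
        fix x assume "x \<in> iota d ` ?S'"
        then obtain z where z: "z \<in> ?S'" "x = iota d z" by blast
        have "Qf (fl x) m n" using inSA[of x] zS[OF z(1)] z by auto
        then show "x \<in> ?SA" using zS[OF z(1)] z by auto
      qed
    qed
    have cardeq: "card ?SA = card ?S'" using bij_betw_same_card[OF bij] .
    have Np: "?N - p = m' + n' + 1" unfolding p_def m'_def n'_def using d(1) mn by simp
    have m'm: "m' < m" and m'n': "m' \<le> n'" unfolding m'_def n'_def using d(1) mn by auto
    have lib: "length (iota d b) = m" using b by simp
    show ?thesis
    proof (cases "m \<le> p")
      case True
      have "card ?S' = ?q ^ (p - m) * card {y. length y = ?N - p \<and> R y}"
        by (rule count_split_a[OF lib True]) (use d(1) mn p_def in simp)
      also have "{y::'a list. length y = ?N - p \<and> R y}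
          = {y. length y = m'+n'+1 \<and> take (length ([]::'a list)) y = [] \<and> Qf (fl y) m' n'}"
        unfolding Np R_def by simp
      also have "card \<dots> = ?q ^ (2*m' - length ([]::'a list))"
        by (rule less.IH[OF m'm m'n']) simp
      also have "?q ^ (p - m) * ?q ^ (2*m' - length ([]::'a list)) = ?q ^ m"
      proof -
        have e: "p - m + 2*m' = m" using True d(1) unfolding p_def m'_def by arith
        show ?thesis unfolding power_add[symmetric] using e by simp
      qed
      finally show ?thesis using cardeq by simp
    next
      case False
      have "card ?S' = card {y. length y = ?N - p \<and> take (m - p) y = drop p (iota d b) \<and> R y}"
        by (rule count_split_b[OF lib]) (use False mn in simp_all)
      also have "{y::'a list. length y = ?N - p \<and> take (m - p) y = drop p (iota d b) \<and> R y}
          = {y. length y = m'+n'+1 \<and> take (length (drop p (iota d b))) y = drop p (iota d b)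
               \<and> Qf (fl y) m' n'}"
        unfolding Np R_def using lib by simp
      also have "card \<dots> = ?q ^ (2*m' - length (drop p (iota d b)))"
        by (rule less.IH[OF m'm m'n']) (use lib False in \<open>simp add: m'_def p_def\<close>)
      also have "2*m' - length (drop p (iota d b)) = m"
      proof -
        have e: "2*m' - (m - p) = m" using False d(1) unfolding p_def m'_def by arith
        show ?thesis using lib e by simp
      qed
      finally show ?thesis using cardeq by simp
    qed
  qed
  let ?T = "{x::'a list. length x = ?N \<and> Qf (fl x) m n}"
  have "card {x\<in>?T. take (length a) x = a} = ?q ^ (m - length a) * ?q ^ m"
  proof (rule sum_prefix[where N = ?N])
    show "\<forall>b. length b = m \<longrightarrow> card {x\<in>?T. take m x = b} = ?q ^ m"
    proof (intro allI impI)
      fix b :: "'a list" assume b: "length b = m"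
      have "{x\<in>?T. take m x = b} = {x. length x = ?N \<and> take m x = b \<and> Qf (fl x) m n}" by auto
      then show "card {x\<in>?T. take m x = b} = ?q ^ m" using full[OF b] by simp
    qed
  qed (use less.prems in auto)
  moreover have "{x\<in>?T. take (length a) x = a}
      = {x::'a list. length x = ?N \<and> take (length a) x = a \<and> Qf (fl x) m n}" by auto
  ultimately show ?case using less.prems by (simp add: power_add[symmetric] mult_2)
qed


theorem lemma16:
  fixes a :: "'a::{finite, field} list" and k m n :: nat
  assumes "k \<le> m" and "m \<le> n + 1" and "length a = k"
  shows "card {x :: 'a list. length x = m + n + 1 \<and> take k x = a
                 \<and> mat_rank (hankel m n x) \<le> m}
         = card (UNIV :: 'a set) ^ (2 * m - k)"
proof (cases "m \<le> n")
  case True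
  have "{x :: 'a list. length x = m + n + 1 \<and> take k x = a \<and> mat_rank (hankel m n x) \<le> m}
      = {x. length x = m+n+1 \<and> take (length a) x = a \<and> Qf (fl x) m n}"
    using assms(3) by (auto simp: rank_hankel_iff)
  then show ?thesis using main_count[OF True, of a] assms by simp
next
  case False
  then have mn: "m = n + 1" using assms(2) by simp
  have rk: "mat_rank (hankel m n x) \<le> m" for x :: "'a list"
  proof -
    have "hankel m n x \<in> carrier_mat (m+1) (n+1)" by (simp add: hankel_def)
    then have "vec_space.rank (m+1) (hankel m n x) \<le> n+1" by (rule vec_space.rank_le_nc)
    then show ?thesis unfolding mat_rank_def using mn by (simp add: hankel_def)
  qed
  have "{x :: 'a list. length x = m + n + 1 \<and> take k x = a \<and> mat_rank (hankel m n x) \<le> m}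
      = {x. length x = m+n+1 \<and> take k x = a}" using rk by auto
  also have "card \<dots> = card (UNIV :: 'a set) ^ (m+n+1 - k)"
    by (rule card_prefix) (use assms in auto)
  also have "m+n+1 - k = 2*m - k" using mn by simp
  finally show ?thesis .
qed

end
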